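(* Let $k\ge 2$. The $3$-graph $\mathcal{E}\cup\mathcal{F}$ contains no three edges whose union has exactly $4$ vertices.
   Context: Let $A_1=\{v^1_1,\dots,v^1_{4k-3}\}$, $A_2=\{v^2_1,\dots,v^2_{4k-3}\}$ be disjoint sets and $v_1^3$ a further vertex. For $i\in[1,k-1]$ define the sets of $3$-edges (writing $xyz$ for $\{x,y,z\}$) $\mathcal{E}_{1,i}=\{v_{2i-1}^1v_j^2v_{j+1}^2 : j\in[2i-1,4k-2-2i]\}$, $\mathcal{E}_{2,i}=\{v_j^1v_{j+1}^1v_{4k-1-2i}^2 : j\in[2i-1,4k-2-2i]\}$, $\mathcal{E}_{3,i}=\{v_{4k-1-2i}^1v_j^2v_{j+1}^2 : j\in[2i+1,4k-2-2i]\}$, $\mathcal{E}_{4,i}=\{v_j^1v_{j+1}^1v_{2i+1}^2 : j\in[2i+1,4k-2-2i]\}$, $\mathcal{E}_i=\mathcal{E}_{1,i}\cup\mathcal{E}_{2,i}\cup\mathcal{E}_{3,i}\cup\mathcal{E}_{4,i}$, and $\mathcal{E}=\bigcup_{i=1}^{k-1}\mathcal{E}_i$. Let $\mathcal{F}=\{v_j^lv_{j+1}^lv_1^3 : j\in[1,4k-4],\ l\in\{1,2\}\}$. *)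

theory Defs
  imports Main
begin

definition v :: "nat \<Rightarrow> nat \<Rightarrow> nat \<times> nat" where
  "v l j = (l, j)"

definition E1 :: "nat \<Rightarrow> nat \<Rightarrow> (nat \<times> nat) set set" where
  "E1 k i = {{v 1 (2*i-1), v 2 j, v 2 (j+1)} | j. j \<in> {2*i-1 .. 4*k-2-2*i}}"

definition E2 :: "nat \<Rightarrow> nat \<Rightarrow> (nat \<times> nat) set set" where
  "E2 k i = {{v 1 j, v 1 (j+1), v 2 (4*k-1-2*i)} | j. j \<in> {2*i-1 .. 4*k-2-2*i}}"

definition E3 :: "nat \<Rightarrow> nat \<Rightarrow> (nat \<times> nat) set set" where
  "E3 k i = {{v 1 (4*k-1-2*i), v 2 j, v 2 (j+1)} | j. j \<in> {2*i+1 .. 4*k-2-2*i}}"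

definition E4 :: "nat \<Rightarrow> nat \<Rightarrow> (nat \<times> nat) set set" where
  "E4 k i = {{v 1 j, v 1 (j+1), v 2 (2*i+1)} | j. j \<in> {2*i+1 .. 4*k-2-2*i}}"

definition Ei :: "nat \<Rightarrow> nat \<Rightarrow> (nat \<times> nat) set set" where
  "Ei k i = E1 k i \<union> E2 k i \<union> E3 k i \<union> E4 k i"

definition EE :: "nat \<Rightarrow> (nat \<times> nat) set set" where
  "EE k = (\<Union>i\<in>{1..k-1}. Ei k i)"

definition FF :: "nat \<Rightarrow> (nat \<times> nat) set set" where
  "FF k = {{v l j, v l (j+1), v 3 1} | j l. j \<in> {1..4*k-4} \<and> l \<in> {1,2}}"

end

theory Submission
  imports Defs
begin

definition gform :: "(nat \<times> nat) set \<Rightarrow> bool" where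
  "gform e = (\<exists>l j l' m. e = {(l,j),(l,j+1),(l',m)} \<and> l \<noteq> l' \<and> odd m)"

lemma gform_intro:
  assumes "e = {(l,j),(l,j+1),(l',m)}" "l \<noteq> l'" "odd m"
  shows "gform e"
  unfolding gform_def
  apply (rule exI)+
  apply (intro conjI)
    apply (rule assms(1))
   apply (rule assms(2))
  apply (rule assms(3))
  done

lemma EE_gform:
  assumes "e \<in> EE k \<union> FF k"
  shows "gform e"
proof (cases "e \<in> EE k")
  case True
  then have "\<exists>i. i \<in> {1..k-1} \<and> e \<in> Ei k i" unfolding EE_def by auto
  then obtain i where i: "i \<in> {1..k-1}" and e: "e \<in> Ei k i" by (elim exE conjE)
  have o1: "odd (4*k-1-2*i)" using i by auto
  have o2: "odd (2*i-1)" using i by auto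
  have o3: "odd (2*i+1)" by auto
  have "e \<in> E1 k i \<or> e \<in> E2 k i \<or> e \<in> E3 k i \<or> e \<in> E4 k i" using e unfolding Ei_def by auto
  moreover
  { assume "e \<in> E1 k i"
    then have "\<exists>j. e = {(1,2*i-1),(2,j),(2,j+1)}" unfolding E1_def v_def by auto
    then obtain j where "e = {(1,2*i-1),(2,j),(2,j+1)}" by (elim exE)
    then have "e = {(2,j),(2,j+1),(1,2*i-1)}" by auto
    then have ?thesis by (rule gform_intro) (use o2 in auto) }
  moreover
  { assume "e \<in> E2 k i"
    then have "\<exists>j. e = {(1,j),(1,j+1),(2,4*k-1-2*i)}" unfolding E2_def v_def by auto
    then obtain j where "e = {(1,j),(1,j+1),(2,4*k-1-2*i)}" by (elim exE)
    then have ?thesis by (rule gform_intro) (use o1 in auto) }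
  moreover
  { assume "e \<in> E3 k i"
    then have "\<exists>j. e = {(1,4*k-1-2*i),(2,j),(2,j+1)}" unfolding E3_def v_def by auto
    then obtain j where "e = {(1,4*k-1-2*i),(2,j),(2,j+1)}" by (elim exE)
    then have "e = {(2,j),(2,j+1),(1,4*k-1-2*i)}" by auto
    then have ?thesis by (rule gform_intro) (use o1 in auto) }
  moreover
  { assume "e \<in> E4 k i"
    then have "\<exists>j. e = {(1,j),(1,j+1),(2,2*i+1)}" unfolding E4_def v_def by auto
    then obtain j where "e = {(1,j),(1,j+1),(2,2*i+1)}" by (elim exE)
    then have ?thesis by (rule gform_intro) (use o3 in auto) }
  ultimately show ?thesis by blast
next
  case False
  then have "e \<in> FF k" using assms by simp
  then have "\<exists>j l. e = {v l j, v l (j+1), v 3 1} \<and> l \<in> {1,2}" unfolding FF_def by auto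
  then obtain j l where "e = {v l j, v l (j+1), v 3 1}" "l \<in> {1,2}" by (elim exE conjE)
  then show ?thesis unfolding v_def by (intro gform_intro) auto
qed

definition nice :: "(nat \<times> nat) \<Rightarrow> (nat \<times> nat) set \<Rightarrow> bool" where
  "nice z e = (z \<in> e \<and> even (snd z) \<and> (\<forall>y\<in>e. even (snd y) \<longrightarrow> y = z) \<and>
     (\<exists>p t. e = {z,p,t} \<and> fst p = fst z \<and> (p = (fst z, snd z + 1) \<or> snd p + 1 = snd z)
        \<and> fst t \<noteq> fst z \<and> odd (snd t)))"

lemma gform_nice: "gform e \<Longrightarrow> \<exists>z. nice z e \<and> card e = 3"
  unfolding gform_def
proof (elim exE conjE)
  fix l j l' m assume e: "e = {(l,j),(l,j+1),(l',m)}" and ll: "l \<noteq> l'" and m: "odd m"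
  have c: "card e = 3" using e ll by auto
  show "\<exists>z. nice z e \<and> card e = 3"
  proof (cases "even j")
    case True
    have "nice (l,j) e" unfolding nice_def
    proof (intro conjI)
      show "\<forall>y\<in>e. even (snd y) \<longrightarrow> y = (l, j)" using e True m by auto
      show "\<exists>p t. e = {(l,j),p,t} \<and> fst p = fst (l,j) \<and> (p = (fst (l,j), snd (l,j) + 1) \<or> snd p + 1 = snd (l,j))
        \<and> fst t \<noteq> fst (l,j) \<and> odd (snd t)"
        by (-, rule exI[of _ "(l,j+1)"], rule exI[of _ "(l',m)"]) (use e ll m in simp)
    qed (use e True in auto)
    then show ?thesis using c by blast
  next
    case False
    have "nice (l,j+1) e" unfolding nice_def
    proof (intro conjI)
      show "\<forall>y\<in>e. even (snd y) \<longrightarrow> y = (l, j+1)" using e False m by auto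
      show "\<exists>p t. e = {(l,j+1),p,t} \<and> fst p = fst (l,j+1) \<and> (p = (fst (l,j+1), snd (l,j+1) + 1) \<or> snd p + 1 = snd (l,j+1))
        \<and> fst t \<noteq> fst (l,j+1) \<and> odd (snd t)"
        by (-, rule exI[of _ "(l,j)"], rule exI[of _ "(l',m)"]) (use e ll m in \<open>simp add: insert_commute\<close>)
    qed (use e False in auto)
    then show ?thesis using c by blast
  qed
qed

lemma union_full:
  assumes "finite U" "A \<subseteq> U" "B \<subseteq> U" "card A = 3" "card B = 3" "A \<noteq> B" "card U = 4"
  shows "A \<union> B = U"
proof -
  have fA: "finite A" "finite B" using assms finite_subset by auto
  have "\<not> B \<subseteq> A" using assms fA card_subset_eq by metis
  then have "A \<subset> A \<union> B" by blast
  then have "card A < card (A \<union> B)" using fA by (simp add: psubset_card_mono)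
  then have "card (A \<union> B) \<ge> card U" using assms by simp
  moreover have sub: "A \<union> B \<subseteq> U" using assms by auto
  moreover have "card (A \<union> B) \<le> card U" using card_mono[OF assms(1) sub] .
  ultimately have "card (A \<union> B) = card U" by simp
  then show ?thesis using card_subset_eq[OF assms(1) sub] by simp
qed

lemma fin:
  assumes e1: "e1 = {z,p1,t1}" and e2: "e2 = {z,p2,t2}" and e3: "e3 = {z,p3,t3}"
    and p: "fst p1 = fst z" "fst p2 = fst z" "fst p3 = fst z"
    "snd p1 \<noteq> snd z" "snd p2 \<noteq> snd z" "snd p3 \<noteq> snd z"
    "p1 \<in> {a,b}" "p2 \<in> {a,b}" "p3 \<in> {a,b}"
    and t: "fst t1 \<noteq> fst z" "fst t2 \<noteq> fst z" "fst t3 \<noteq> fst z"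
    and d: "e1 \<noteq> e3" "e2 \<noteq> e3"
    and c: "card (e1 \<union> e2 \<union> e3) = 4"
    and pp: "p1 \<noteq> p2"
  shows False
proof -
  let ?U = "e1 \<union> e2 \<union> e3"
  have fU: "finite ?U" using e1 e2 e3 by simp
  have sub: "{z,p1,p2,t1} \<subseteq> ?U" using e1 e2 by auto
  have "z \<noteq> p1" "z \<noteq> p2" "z \<noteq> t1" "p1 \<noteq> t1" "p2 \<noteq> t1" using p t by auto
  then have "card {z,p1,p2,t1} = 4" using pp by simp
  then have U: "{z,p1,p2,t1} = ?U" using card_subset_eq[OF fU sub] c by simp
  have "t2 \<in> ?U" "t3 \<in> ?U" using e2 e3 by auto
  then have "t2 = t1" "t3 = t1" using U p t by auto
  moreover have "p3 = p1 \<or> p3 = p2" using p pp by auto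
  ultimately show False using e1 e2 e3 d by auto
qed

lemma allsame:
  assumes e1: "e1 = {z,p,t1}" and e2: "e2 = {z,p,t2}" and e3: "e3 = {z,p,t3}"
    and p: "fst p = fst z" "snd p \<noteq> snd z"
    and t: "fst t1 \<noteq> fst z" "fst t2 \<noteq> fst z" "fst t3 \<noteq> fst z"
    and d: "e1 \<noteq> e2" "e1 \<noteq> e3" "e2 \<noteq> e3"
    and c: "card (e1 \<union> e2 \<union> e3) = 4"
  shows False
proof -
  have "t1 \<noteq> t2" "t1 \<noteq> t3" "t2 \<noteq> t3" using d e1 e2 e3 by auto
  moreover have "z \<noteq> p" "z \<noteq> t1" "z \<noteq> t2" "z \<noteq> t3" "p \<noteq> t1" "p \<noteq> t2" "p \<noteq> t3"
    using p t by auto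
  moreover have "e1 \<union> e2 \<union> e3 = {z,p,t1,t2,t3}" using e1 e2 e3 by auto
  ultimately show False using c by simp
qed

lemma nice_parts:
  assumes "nice z e"
  obtains p t where "e = {z,p,t}" "fst p = fst z" "snd p \<noteq> snd z"
    "p \<in> {(fst z, snd z + 1), (fst z, snd z - 1)}" "fst t \<noteq> fst z"
proof -
  from assms obtain p t where e: "e = {z,p,t}" and f: "fst p = fst z"
    and o: "p = (fst z, snd z + 1) \<or> snd p + 1 = snd z" and t: "fst t \<noteq> fst z"
    unfolding nice_def by blast
  have "snd p \<noteq> snd z" using o by auto
  moreover have "p \<in> {(fst z, snd z + 1), (fst z, snd z - 1)}"
  proof (cases "p = (fst z, snd z + 1)")
    case False
    then have "snd p + 1 = snd z" using o by blast
    then have "p = (fst z, snd z - 1)" using f by (simp add: prod_eq_iff)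
    then show ?thesis by simp
  qed simp
  ultimately show ?thesis using that e f t by blast
qed

theorem lemma3p1:
  fixes k :: nat
  assumes "k \<ge> 2"
  shows "\<not> (\<exists>e1 e2 e3. e1 \<in> EE k \<union> FF k \<and> e2 \<in> EE k \<union> FF k \<and> e3 \<in> EE k \<union> FF k
           \<and> e1 \<noteq> e2 \<and> e1 \<noteq> e3 \<and> e2 \<noteq> e3 \<and> card (e1 \<union> e2 \<union> e3) = 4)"
proof
  assume "\<exists>e1 e2 e3. e1 \<in> EE k \<union> FF k \<and> e2 \<in> EE k \<union> FF k \<and> e3 \<in> EE k \<union> FF k
           \<and> e1 \<noteq> e2 \<and> e1 \<noteq> e3 \<and> e2 \<noteq> e3 \<and> card (e1 \<union> e2 \<union> e3) = 4"
  then obtain e1 e2 e3 where m: "e1 \<in> EE k \<union> FF k" "e2 \<in> EE k \<union> FF k" "e3 \<in> EE k \<union> FF k"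
    and d: "e1 \<noteq> e2" "e1 \<noteq> e3" "e2 \<noteq> e3" and c: "card (e1 \<union> e2 \<union> e3) = 4"
    by blast
  obtain z1 where n1: "nice z1 e1" and c1: "card e1 = 3" using gform_nice[OF EE_gform[OF m(1)]] by blast
  obtain z2 where n2: "nice z2 e2" and c2: "card e2 = 3" using gform_nice[OF EE_gform[OF m(2)]] by blast
  obtain z3 where n3: "nice z3 e3" and c3: "card e3 = 3" using gform_nice[OF EE_gform[OF m(3)]] by blast
  define U where "U = e1 \<union> e2 \<union> e3"
  have cU: "card U = 4" using c U_def by simp
  then have fU: "finite U" by (intro card_ge_0_finite) simp
  have u12: "e1 \<union> e2 = U" by (rule union_full[OF fU _ _ c1 c2 d(1)]) (use cU U_def in auto)
  have u13: "e1 \<union> e3 = U" by (rule union_full[OF fU _ _ c1 c3 d(2)]) (use cU U_def in auto)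
  have u23: "e2 \<union> e3 = U" by (rule union_full[OF fU _ _ c2 c3 d(3)]) (use cU U_def in auto)
  have z1: "z1 \<in> e1" "even (snd z1)" "\<forall>y\<in>e1. even (snd y) \<longrightarrow> y = z1" using n1 unfolding nice_def by blast+
  have z2: "z2 \<in> e2" "even (snd z2)" "\<forall>y\<in>e2. even (snd y) \<longrightarrow> y = z2" using n2 unfolding nice_def by blast+
  have z3: "z3 \<in> e3" "even (snd z3)" "\<forall>y\<in>e3. even (snd y) \<longrightarrow> y = z3" using n3 unfolding nice_def by blast+
  have zU: "z1 \<in> U" "z2 \<in> U" "z3 \<in> U" using z1(1) z2(1) z3(1) U_def by auto
  have ev12: "\<forall>y\<in>U. even (snd y) \<longrightarrow> y = z1 \<or> y = z2" using u12 z1(3) z2(3) by blast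
  have ev13: "\<forall>y\<in>U. even (snd y) \<longrightarrow> y = z1 \<or> y = z3" using u13 z1(3) z3(3) by blast
  have ev23: "\<forall>y\<in>U. even (snd y) \<longrightarrow> y = z2 \<or> y = z3" using u23 z2(3) z3(3) by blast
  have a: "z3 = z1 \<or> z3 = z2" using ev12 zU(3) z3(2) by blast
  have b: "z2 = z1 \<or> z2 = z3" using ev13 zU(2) z2(2) by blast
  have cc: "z1 = z2 \<or> z1 = z3" using ev23 zU(1) z1(2) by blast
  have e12: "z1 = z2" using a b cc by metis
  have e13: "z1 = z3" using a b cc by metis
  obtain p1 t1 where P1: "e1 = {z1,p1,t1}" "fst p1 = fst z1" "snd p1 \<noteq> snd z1"
    "p1 \<in> {(fst z1, snd z1 + 1), (fst z1, snd z1 - 1)}" "fst t1 \<noteq> fst z1"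
    using nice_parts[OF n1] by blast
  obtain p2 t2 where P2: "e2 = {z1,p2,t2}" "fst p2 = fst z1" "snd p2 \<noteq> snd z1"
    "p2 \<in> {(fst z1, snd z1 + 1), (fst z1, snd z1 - 1)}" "fst t2 \<noteq> fst z1"
    using nice_parts[OF n2] e12 by metis
  obtain p3 t3 where P3: "e3 = {z1,p3,t3}" "fst p3 = fst z1" "snd p3 \<noteq> snd z1"
    "p3 \<in> {(fst z1, snd z1 + 1), (fst z1, snd z1 - 1)}" "fst t3 \<noteq> fst z1"
    using nice_parts[OF n3] e13 by metis
  have c213: "card (e2 \<union> e1 \<union> e3) = 4" using c by (simp add: Un_ac)
  have c312: "card (e3 \<union> e1 \<union> e2) = 4" using c by (simp add: Un_ac)
  show False
  proof (cases "p1 = p2 \<and> p1 = p3")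
    case True
    have q: "p2 = p1" "p3 = p1" using True by auto
    have a2: "e2 = {z1,p1,t2}" using P2(1) unfolding q .
    have a3: "e3 = {z1,p1,t3}" using P3(1) unfolding q .
    show False by (rule allsame[OF P1(1) a2 a3 P1(2,3) P1(5) P2(5) P3(5) d c])
  next
    case False
    then consider "p1 \<noteq> p2" | "p1 \<noteq> p3" | "p2 \<noteq> p3" by blast
    then show False
    proof cases
      case 1
      show False by (rule fin[OF P1(1) P2(1) P3(1) P1(2) P2(2) P3(2) P1(3) P2(3) P3(3) P1(4) P2(4) P3(4)
        P1(5) P2(5) P3(5) d(2) d(3) c 1])
    next
      case 2
      show False by (rule fin[OF P1(1) P3(1) P2(1) P1(2) P3(2) P2(2) P1(3) P3(3) P2(3) P1(4) P3(4) P2(4)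
        P1(5) P3(5) P2(5) d(1) d(3)[symmetric] _ 2]) (use c in \<open>simp add: Un_ac\<close>)
    next
      case 3
      show False by (rule fin[OF P2(1) P3(1) P1(1) P2(2) P3(2) P1(2) P2(3) P3(3) P1(3) P2(4) P3(4) P1(4)
        P2(5) P3(5) P1(5) d(1)[symmetric] d(2)[symmetric] _ 3]) (use c in \<open>simp add: Un_ac\<close>)
    qed
  qed
qed

end
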